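(* Let $G$ be a finite abelian group and let $\rho\ge 2$ be an integer. Then $$s_\rho(G)=\max\{|H|\cdot t_\rho(G/H): H \text{ a proper subgroup of } G\}.$$
   Context: Groups are written additively. For $A\subseteq G$ let $A_0:=A\cup\{0\}$ and $\langle A\rangle^+_\rho:=\rho A_0=\{a_1+\dots+a_\rho:a_i\in A_0\}$. $\operatorname{diam}^+_A(G):=\min\{\rho\in\mathbb{N}_0:\langle A\rangle^+_\rho=G\}$ ($\min\varnothing=\infty$); $\operatorname{diam}^+(G):=\max\{\operatorname{diam}^+_A(G):\langle A\rangle=G\}$. The period of $S\subseteq G$ is $\pi(S):=\{g\in G:S+g=S\}$; $S$ is aperiodic if $\pi(S)=\{0\}$ and periodic otherwise. A subset $A\subseteq G$ is $\rho$-maximal if it is maximal under inclusion subject to $\operatorname{diam}^+_A(G)\ge\rho$, i.e. subject to $\langle A\rangle^+_{\rho-1}\neq G$. With the convention $\max\varnothing=0$: $s_\rho(G):=\max\{|A|: A\subseteq G,\ \rho\le\operatorname{diam}^+_A(G)<\infty\}$ and $t_\rho(G):=\max\{|A|: A \text{ is an aperiodic } \rho\text{-maximal generating set for } G\}$. *)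

theory Defs
  imports "HOL-Algebra.Algebra" "HOL-Library.Extended_Nat"
begin

(* Multiplicative (HOL-Algebra) rendering of the additive notions of the paper. *)

definition zero_ext :: "('a,'b) monoid_scheme \<Rightarrow> 'a set \<Rightarrow> 'a set" where
  "zero_ext G A = A \<union> {\<one>\<^bsub>G\<^esub>}"

fun sumset_pow :: "('a,'b) monoid_scheme \<Rightarrow> 'a set \<Rightarrow> nat \<Rightarrow> 'a set" where
  "sumset_pow G A 0 = {\<one>\<^bsub>G\<^esub>}"
| "sumset_pow G A (Suc n) = set_mult G (sumset_pow G A n) (zero_ext G A)"

definition diam_plus :: "('a,'b) monoid_scheme \<Rightarrow> 'a set \<Rightarrow> enat" where
  "diam_plus G A = (if \<exists>r. sumset_pow G A r = carrier G
                     then enat (LEAST r. sumset_pow G A r = carrier G) else \<infinity>)"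

definition period :: "('a,'b) monoid_scheme \<Rightarrow> 'a set \<Rightarrow> 'a set" where
  "period G S = {g \<in> carrier G. r_coset G S g = S}"

definition aperiodic :: "('a,'b) monoid_scheme \<Rightarrow> 'a set \<Rightarrow> bool" where
  "aperiodic G S \<longleftrightarrow> period G S = {\<one>\<^bsub>G\<^esub>}"

definition rho_maximal :: "('a,'b) monoid_scheme \<Rightarrow> nat \<Rightarrow> 'a set \<Rightarrow> bool" where
  "rho_maximal G \<rho> A \<longleftrightarrow> A \<subseteq> carrier G \<and> enat \<rho> \<le> diam_plus G A \<and>
     (\<forall>B. A \<subset> B \<and> B \<subseteq> carrier G \<longrightarrow> \<not> enat \<rho> \<le> diam_plus G B)"

definition s_rho :: "('a,'b) monoid_scheme \<Rightarrow> nat \<Rightarrow> nat" where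
  "s_rho G \<rho> = Max ({card A | A. A \<subseteq> carrier G \<and> enat \<rho> \<le> diam_plus G A
                                  \<and> diam_plus G A < \<infinity>} \<union> {0})"

definition t_rho :: "('a,'b) monoid_scheme \<Rightarrow> nat \<Rightarrow> nat" where
  "t_rho G \<rho> = Max ({card A | A. aperiodic G A \<and> rho_maximal G \<rho> A
                                  \<and> A \<subseteq> carrier G \<and> generate G A = carrier G} \<union> {0})"

end

theory Submission
  imports Defs
begin


lemma (in monoid) sumset_carrier:
  "A \<subseteq> carrier G \<Longrightarrow> sumset_pow G A n \<subseteq> carrier G"
  by (induction n) (auto simp: set_mult_def zero_ext_def)

lemma sumset_mono_set:
  "A \<subseteq> C \<Longrightarrow> sumset_pow G A n \<subseteq> sumset_pow G C n"
  by (induction n) (auto simp: set_mult_def zero_ext_def)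

lemma sumset_zero_ext:
  "sumset_pow G (zero_ext G A) n = sumset_pow G A n"
  by (induction n) (auto simp: zero_ext_def)

lemma (in monoid) sumset_one: "A \<subseteq> carrier G \<Longrightarrow> \<one> \<in> sumset_pow G A n"
proof (induction n)
  case (Suc n)
  then have "\<one> \<otimes> \<one> \<in> sumset_pow G A (Suc n)"
    unfolding sumset_pow.simps set_mult_def zero_ext_def by blast
  then show ?case by simp
qed simp

lemma (in monoid) sumset_incr:
  "A \<subseteq> carrier G \<Longrightarrow> sumset_pow G A n \<subseteq> sumset_pow G A (Suc n)"
proof
  fix x assume A: "A \<subseteq> carrier G" and x: "x \<in> sumset_pow G A n"
  then have "x \<in> carrier G" using sumset_carrier by blast
  then have "x = x \<otimes> \<one>" by simp
  moreover have "x \<otimes> \<one> \<in> sumset_pow G A (Suc n)"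
    using x by (auto simp: set_mult_def zero_ext_def)
  ultimately show "x \<in> sumset_pow G A (Suc n)" by simp
qed

lemma diam_eq:
  assumes "\<And>n. sumset_pow G A n = carrier G \<longleftrightarrow> sumset_pow G' B n = carrier G'"
  shows "diam_plus G A = diam_plus G' B"
  using assms unfolding diam_plus_def by simp

lemma diam_fin_iff: "diam_plus G A < \<infinity> \<longleftrightarrow> (\<exists>r. sumset_pow G A r = carrier G)"
  unfolding diam_plus_def by simp

lemma diam_le:
  assumes "sumset_pow G A r = carrier G" shows "diam_plus G A \<le> enat r"
  using assms unfolding diam_plus_def by (auto intro: Least_le)

lemma (in monoid) rho_max_one:
  assumes "rho_maximal G \<rho> A" shows "\<one> \<in> A"
proof (rule ccontr)
  assume n: "\<one> \<notin> A"
  have "A \<subset> zero_ext G A" using n by (auto simp: zero_ext_def)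
  moreover have "zero_ext G A \<subseteq> carrier G" using assms by (auto simp: zero_ext_def rho_maximal_def)
  moreover have "diam_plus G (zero_ext G A) = diam_plus G A"
    by (rule diam_eq) (simp add: sumset_zero_ext)
  moreover have "enat \<rho> \<le> diam_plus G (zero_ext G A)" using assms calculation(3)
    by (simp add: rho_maximal_def)
  ultimately show False using assms unfolding rho_maximal_def by blast
qed

lemma (in group) fin_diam_generate:
  assumes "A \<subseteq> carrier G" "sumset_pow G A r = carrier G"
  shows "generate G A = carrier G"
proof
  show "generate G A \<subseteq> carrier G" using assms(1) generate_incl by blast
  have "sumset_pow G A n \<subseteq> generate G A" for n
  proof (induction n)
    case 0 then show ?case by (simp add: generate.one)
  next
    case (Suc n)
    show ?case
    proof
      fix x assume "x \<in> sumset_pow G A (Suc n)"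
      then obtain y z where "y \<in> sumset_pow G A n" "z \<in> zero_ext G A" "x = y \<otimes> z"
        by (auto simp: set_mult_def)
      then show "x \<in> generate G A" using Suc
        by (auto simp: zero_ext_def intro: generate.eng generate.incl generate.one)
    qed
  qed
  then show "carrier G \<subseteq> generate G A" using assms(2) by metis
qed

lemma (in group) generate_fin_diam:
  assumes A: "A \<subseteq> carrier G" and gen: "generate G A = carrier G" and fin: "finite (carrier G)"
  shows "\<exists>r. sumset_pow G A r = carrier G"
proof -
  let ?P = "sumset_pow G A"
  have "\<exists>n. ?P (Suc n) = ?P n"
  proof (rule ccontr)
    assume "\<not> ?thesis"
    then have strict: "?P n \<subset> ?P (Suc n)" for n using sumset_incr[OF A] by blast
    have "n \<le> card (?P n)" for n
    proof (induction n)
      case (Suc n)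
      have "finite (?P (Suc n))" using sumset_carrier[OF A] fin finite_subset by blast
      then have "card (?P n) < card (?P (Suc n))" using strict psubset_card_mono by blast
      then show ?case using Suc by simp
    qed simp
    moreover have "card (?P n) \<le> card (carrier G)" for n
      using sumset_carrier[OF A] fin card_mono by blast
    ultimately have "Suc (card (carrier G)) \<le> card (carrier G)" by (meson order_trans)
    then show False by simp
  qed
  then obtain n where n: "?P (Suc n) = ?P n" by blast
  define P where "P = ?P n"
  have Pc: "P \<subseteq> carrier G" unfolding P_def using sumset_carrier[OF A] .
  have Pfin: "finite P" using Pc fin finite_subset by blast
  have clos: "x \<otimes> b \<in> P" if "x \<in> P" "b \<in> A" for x b
  proof -
    have "x \<otimes> b \<in> ?P (Suc n)" using that unfolding P_def by (auto simp: set_mult_def zero_ext_def)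
    then show ?thesis using n unfolding P_def by simp
  qed
  define T where "T = {g \<in> carrier G. \<forall>x\<in>P. x \<otimes> g \<in> P}"
  have "generate G A \<subseteq> T"
  proof
    fix g assume "g \<in> generate G A"
    then show "g \<in> T"
    proof (induction rule: generate.induct)
      case one then show ?case unfolding T_def using Pc by auto
    next
      case (incl h) then show ?case unfolding T_def using clos A by auto
    next
      case (inv h)
      have hc: "h \<in> carrier G" using inv A by auto
      have "(\<lambda>x. x \<otimes> h) ` P = P"
      proof (rule endo_inj_surj[OF Pfin])
        show "(\<lambda>x. x \<otimes> h) ` P \<subseteq> P" using clos inv by auto
        show "inj_on (\<lambda>x. x \<otimes> h) P" using Pc hc by (auto simp: inj_on_def) (meson r_cancel subsetD)
      qed
      then have "\<forall>x\<in>P. x \<otimes> inv h \<in> P"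
      proof (intro ballI)
        fix x assume "x \<in> P" "(\<lambda>x. x \<otimes> h) ` P = P"
        then obtain y where y: "y \<in> P" "x = y \<otimes> h" by blast
        then have "y \<in> carrier G" using Pc by blast
        then have "x \<otimes> inv h = y" using y hc by (simp add: m_assoc)
        then show "x \<otimes> inv h \<in> P" using y by simp
      qed
      then show ?case unfolding T_def using hc by auto
    next
      case (eng h1 h2) then show ?case unfolding T_def using Pc by (auto simp: m_assoc[symmetric])
    qed
  qed
  moreover have "T \<subseteq> P"
  proof
    fix g assume "g \<in> T"
    moreover have "\<one> \<in> P" unfolding P_def using sumset_one[OF A] .
    ultimately show "g \<in> P" unfolding T_def by force
  qed
  ultimately have "P = carrier G" using gen Pc by blast
  then show ?thesis unfolding P_def by blast
qed

lemma finite_card_set: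
  assumes "finite S" shows "finite {card A | A. A \<subseteq> S \<and> Q A}"
proof -
  have "{card A | A. A \<subseteq> S \<and> Q A} \<subseteq> {..card S}" using assms card_mono by auto
  then show ?thesis using finite_subset by blast
qed



lemma union_set_mult_Mod:
  "\<Union>(set_mult (G Mod H) S T) = set_mult G (\<Union>S) (\<Union>T)"
  by (auto simp: set_mult_def)

lemma (in comm_group) set_mult_comm:
  "U \<subseteq> carrier G \<Longrightarrow> V \<subseteq> carrier G \<Longrightarrow> U <#> V = V <#> U"
  unfolding set_mult_def by (auto simp: m_comm subset_iff) (metis m_comm)+

context comm_group
begin

lemma Mod_sumset_rcosets:
  assumes H: "subgroup H G" and B: "B \<subseteq> rcosets H" "H \<in> B"
  shows "sumset_pow (G Mod H) B n \<subseteq> rcosets H"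
proof (induction n)
  case 0
  have "H #> \<one> = H" using H by (simp add: coset_mult_one subgroup.subset)
  then have "H \<in> rcosets H" using H rcosetsI[of H \<one>] subgroup.subset by fastforce
  then show ?case by simp
next
  case (Suc n)
  have N: "H \<lhd> G" using H subgroup_imp_normal by blast
  have ze: "zero_ext (G Mod H) B = B" using B by (auto simp: zero_ext_def)
  show ?case
  proof
    fix Z assume "Z \<in> sumset_pow (G Mod H) B (Suc n)"
    then obtain U V where XY: "U \<in> rcosets H" "V \<in> rcosets H" "Z = U <#> V"
      using Suc B ze by (auto simp: set_mult_def)
    then obtain a b where "a \<in> carrier G" "b \<in> carrier G" "U = H #> a" "V = H #> b"
      unfolding RCOSETS_def by blast
    then have "Z = H #> (a \<otimes> b)" using XY normal.rcos_sum[OF N] by simp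
    then show "Z \<in> rcosets H" using \<open>a \<in> carrier G\<close> \<open>b \<in> carrier G\<close> H
      by (simp add: rcosetsI subgroup.subset)
  qed
qed

lemma union_rcosets_eq:
  assumes H: "subgroup H G" and S: "S \<subseteq> rcosets H"
  shows "\<Union>S = carrier G \<longleftrightarrow> S = rcosets H"
proof
  assume U: "\<Union>S = carrier G"
  show "S = rcosets H"
  proof
    show "rcosets H \<subseteq> S"
    proof
      fix C assume "C \<in> rcosets H"
      then obtain a where a: "a \<in> carrier G" "C = H #> a" unfolding RCOSETS_def by blast
      then obtain U where U: "U \<in> S" "a \<in> U" using U by blast
      then obtain b where b: "b \<in> carrier G" "U = H #> b" using S unfolding RCOSETS_def by blast
      then have "H #> b = H #> a" using repr_independence[of a H b] U H by simp
      then show "C \<in> S" using a b U by simp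
    qed
  qed (rule S)
next
  assume "S = rcosets H" then show "\<Union>S = carrier G" using rcosets_part_G[OF H] by simp
qed

lemma H_mult_union:
  assumes H: "subgroup H G" and B: "B \<subseteq> rcosets H"
  shows "H <#> \<Union>B = \<Union>B"
proof -
  have N: "H \<lhd> G" using H subgroup_imp_normal by blast
  have "H <#> \<Union>B = \<Union>(set_mult (G Mod H) {H} B)" by (simp add: union_set_mult_Mod)
  also have "set_mult (G Mod H) {H} B = (\<lambda>V. H <#> V) ` B"
    by (simp add: set_mult_def UNION_singleton_eq_range)
  also have "\<dots> = (\<lambda>V. V) ` B"
    by (rule image_cong) (simp_all add: normal.rcosets_mult_eq[OF N] subsetD[OF B])
  also have "\<dots> = B" by simp
  finally show ?thesis .
qed

lemma union_Mod_sumset: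
  assumes H: "subgroup H G" and B: "B \<subseteq> rcosets H" "H \<in> B"
  shows "\<Union>(sumset_pow (G Mod H) B n) = H <#> sumset_pow G (\<Union>B) n"
proof (induction n)
  case 0
  have "H <#> {\<one>} = H" using H subgroup.subset
    using r_coset_eq_set_mult[of G H \<one>] coset_mult_one[OF subgroup.subset[OF H]] by simp
  then show ?case by simp
next
  case (Suc n)
  have Hc: "H \<subseteq> carrier G" using H subgroup.subset by blast
  have Ac: "\<Union>B \<subseteq> carrier G" using B rcosets_part_G[OF H] by blast
  have ze: "zero_ext (G Mod H) B = B" using B by (auto simp: zero_ext_def)
  have ze2: "zero_ext G (\<Union>B) = \<Union>B" using B subgroup.one_closed[OF H] by (auto simp: zero_ext_def)
  have "\<Union>(sumset_pow (G Mod H) B (Suc n)) = (H <#> sumset_pow G (\<Union>B) n) <#> \<Union>B"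
    using Suc by (simp add: ze union_set_mult_Mod)
  also have "\<dots> = H <#> (sumset_pow G (\<Union>B) n <#> \<Union>B)"
    using set_mult_assoc[OF Hc sumset_carrier[OF Ac] Ac] .
  finally show ?case by (simp add: ze2)
qed

lemma H_mult_sumset:
  assumes H: "subgroup H G" and B: "B \<subseteq> rcosets H" "H \<in> B"
  shows "H <#> sumset_pow G (\<Union>B) (Suc n) = sumset_pow G (\<Union>B) (Suc n)"
proof -
  have Hc: "H \<subseteq> carrier G" using H subgroup.subset by blast
  have Ac: "\<Union>B \<subseteq> carrier G" using B rcosets_part_G[OF H] by blast
  have ze2: "zero_ext G (\<Union>B) = \<Union>B" using B subgroup.one_closed[OF H] by (auto simp: zero_ext_def)
  let ?P = "sumset_pow G (\<Union>B) n"
  have Pc: "?P \<subseteq> carrier G" using sumset_carrier[OF Ac] .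
  have "H <#> (?P <#> \<Union>B) = (H <#> ?P) <#> \<Union>B" using set_mult_assoc[OF Hc Pc Ac] by simp
  also have "\<dots> = (?P <#> H) <#> \<Union>B" using set_mult_comm[OF Hc Pc] by simp
  also have "\<dots> = ?P <#> (H <#> \<Union>B)" using set_mult_assoc[OF Pc Hc Ac] .
  also have "\<dots> = ?P <#> \<Union>B" using H_mult_union[OF H B(1)] by simp
  finally show ?thesis by (simp add: ze2)
qed

lemma Mod_sumset_iff:
  assumes H: "subgroup H G" and Hne: "H \<noteq> carrier G" and B: "B \<subseteq> rcosets H" "H \<in> B"
  shows "sumset_pow (G Mod H) B n = carrier (G Mod H) \<longleftrightarrow> sumset_pow G (\<Union>B) n = carrier G"
proof (cases n)
  case 0
  have Hc: "H \<subseteq> carrier G" using H subgroup.subset by blast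
  then obtain g where g: "g \<in> carrier G" "g \<notin> H" using Hne by blast
  have "H #> g \<in> rcosets H" using g Hc by (simp add: rcosetsI)
  moreover have "H #> g \<noteq> H" using rcos_self[OF g(1) H] g by auto
  ultimately have 1: "{H} \<noteq> rcosets H" by auto
  have "g \<noteq> \<one>" using g subgroup.one_closed[OF H] by auto
  then have 2: "{\<one>} \<noteq> carrier G" using g by auto
  show ?thesis using 0 1 2 by (simp add: FactGroup_def)
next
  case (Suc m)
  have "sumset_pow (G Mod H) B n = carrier (G Mod H) \<longleftrightarrow> \<Union>(sumset_pow (G Mod H) B n) = carrier G"
    using union_rcosets_eq[OF H Mod_sumset_rcosets[OF H B]] by (simp add: FactGroup_def)
  also have "\<dots> \<longleftrightarrow> sumset_pow G (\<Union>B) n = carrier G"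
  proof -
    have "H <#> sumset_pow G (\<Union>B) n = sumset_pow G (\<Union>B) n"
      using H_mult_sumset[OF H B, of m] Suc by simp
    then show ?thesis using union_Mod_sumset[OF H B, of n] by simp
  qed
  finally show ?thesis .
qed

lemma Mod_diam:
  assumes H: "subgroup H G" and Hne: "H \<noteq> carrier G" and B: "B \<subseteq> rcosets H" "H \<in> B"
  shows "diam_plus (G Mod H) B = diam_plus G (\<Union>B)"
  by (rule diam_eq) (rule Mod_sumset_iff[OF assms])

lemma card_union_cosets:
  assumes H: "subgroup H G" and fin: "finite (carrier G)" and B: "B \<subseteq> rcosets H"
  shows "card (\<Union>B) = card H * card B"
proof -
  have Hc: "H \<subseteq> carrier G" using H subgroup.subset by blast
  have "card (\<Union>B) = sum card B"
  proof (rule card_Union_disjoint)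
    show "pairwise disjnt B" using rcos_disjoint[OF H] B pairwise_subset by blast
    show "finite U" if "U \<in> B" for U using cosets_finite[of U H] that B Hc fin by blast
  qed
  also have "\<dots> = sum (\<lambda>_. card H) B"
    using card_rcosets_equal[OF _ Hc] B by (intro sum.cong) auto
  finally show ?thesis by simp
qed

end


context comm_group
begin

lemma carrier_Mod: "carrier (G Mod H) = rcosets H"
  by (simp add: FactGroup_def)

lemma Mod_group: "subgroup H G \<Longrightarrow> group (G Mod H)"
  using normal.factorgroup_is_group subgroup_imp_normal by blast

lemma ge_dir:
  assumes fin: "finite (carrier G)" and H: "subgroup H G" and Hne: "H \<noteq> carrier G"
    and Bm: "rho_maximal (G Mod H) \<rho> B" and Bc: "B \<subseteq> carrier (G Mod H)"
    and Bg: "generate (G Mod H) B = carrier (G Mod H)"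
  shows "\<Union>B \<subseteq> carrier G \<and> enat \<rho> \<le> diam_plus G (\<Union>B) \<and> diam_plus G (\<Union>B) < \<infinity>
         \<and> card (\<Union>B) = card H * card B"
proof -
  have grp: "group (G Mod H)" using Mod_group[OF H] .
  have HB: "H \<in> B" using monoid.rho_max_one[OF group.is_monoid[OF grp] Bm] by simp
  have B: "B \<subseteq> rcosets H" using Bc carrier_Mod by simp
  have dm: "diam_plus (G Mod H) B = diam_plus G (\<Union>B)" using Mod_diam[OF H Hne B HB] .
  have finM: "finite (carrier (G Mod H))"
    using carrier_Mod rcosets_subset_PowG[OF H] fin by (metis finite_Pow_iff finite_subset)
  obtain r where "sumset_pow (G Mod H) B r = carrier (G Mod H)"
    using group.generate_fin_diam[OF grp Bc Bg finM] by blast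
  then have "diam_plus (G Mod H) B < \<infinity>" using diam_fin_iff by blast
  moreover have "\<Union>B \<subseteq> carrier G" using B rcosets_part_G[OF H] by blast
  moreover have "enat \<rho> \<le> diam_plus (G Mod H) B" using Bm rho_maximal_def by blast
  ultimately show ?thesis using dm card_union_cosets[OF H fin B] by simp
qed

lemma period_subgroup:
  assumes C: "C \<subseteq> carrier G"
  shows "subgroup (period G C) G"
proof (rule subgroupI)
  show "period G C \<subseteq> carrier G" unfolding period_def by blast
  show "period G C \<noteq> {}" using C unfolding period_def by (auto intro!: exI[of _ \<one>])
  fix a assume a: "a \<in> period G C"
  then have ac: "a \<in> carrier G" "C #> a = C" unfolding period_def by auto
  have "C #> inv a = (C #> a) #> inv a" using ac by simp
  also have "\<dots> = C" using C ac(1) by (simp add: coset_mult_assoc)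
  finally show "inv a \<in> period G C" using ac unfolding period_def by simp
  fix b assume b: "b \<in> period G C"
  then have bc: "b \<in> carrier G" "C #> b = C" unfolding period_def by auto
  have "C #> (a \<otimes> b) = (C #> a) #> b" using C ac(1) bc(1) by (simp add: coset_mult_assoc)
  then show "a \<otimes> b \<in> period G C" using ac bc unfolding period_def by simp
qed

lemma le_dir:
  assumes fin: "finite (carrier G)" and rho: "2 \<le> \<rho>"
    and A: "A \<subseteq> carrier G" "enat \<rho> \<le> diam_plus G A" "diam_plus G A < \<infinity>"
  shows "\<exists>H B. subgroup H G \<and> H \<noteq> carrier G \<and> aperiodic (G Mod H) B \<and> rho_maximal (G Mod H) \<rho> B
     \<and> B \<subseteq> carrier (G Mod H) \<and> generate (G Mod H) B = carrier (G Mod H) \<and> card A \<le> card H * card B"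
proof -
  define Cands where "Cands = {C. A \<subseteq> C \<and> C \<subseteq> carrier G \<and> enat \<rho> \<le> diam_plus G C}"
  have finC: "finite Cands" unfolding Cands_def using fin
    by (rule finite_subset[rotated, OF finite_Pow_iff[THEN iffD2]]) auto
  have AC: "A \<in> Cands" unfolding Cands_def using A by auto
  define m where "m = Max (card ` Cands)"
  have "m \<in> card ` Cands" unfolding m_def using finC AC by (intro Max_in) auto
  then obtain C where C: "C \<in> Cands" "card C = m" by blast
  have Cmax: "card C2 \<le> card C" if "C2 \<in> Cands" for C2
    unfolding C(2) m_def using finC that by (intro Max_ge) auto
  have Cc: "C \<subseteq> carrier G" and AsubC: "A \<subseteq> C" and Cd: "enat \<rho> \<le> diam_plus G C"
    using C unfolding Cands_def by auto
  have finCset: "finite C" using Cc fin finite_subset by blast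
  have Cmaxi: "rho_maximal G \<rho> C"
    unfolding rho_maximal_def
  proof (intro conjI Cc Cd allI impI)
    fix B2 assume B2: "C \<subset> B2 \<and> B2 \<subseteq> carrier G"
    show "\<not> enat \<rho> \<le> diam_plus G B2"
    proof
      assume "enat \<rho> \<le> diam_plus G B2"
      then have "B2 \<in> Cands" using B2 AsubC unfolding Cands_def by auto
      then have "card B2 \<le> card C" by (rule Cmax)
      moreover have "finite B2" using B2 fin finite_subset by blast
      then have "card C < card B2" using B2 psubset_card_mono by blast
      ultimately show False by simp
    qed
  qed
  have "\<exists>r. sumset_pow G A r = carrier G" using A(3) by (simp only: diam_fin_iff)
  then obtain r where r: "sumset_pow G A r = carrier G" by blast
  have Cr: "sumset_pow G C r = carrier G"
  proof (rule subset_antisym)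
    show "sumset_pow G C r \<subseteq> carrier G" by (rule sumset_carrier[OF Cc])
    have "sumset_pow G A r \<subseteq> sumset_pow G C r" by (rule sumset_mono_set[OF AsubC])
    then show "carrier G \<subseteq> sumset_pow G C r" using r by simp
  qed
  have C1: "\<one> \<in> C" using rho_max_one[OF Cmaxi] .
  define H where "H = period G C"
  have H: "subgroup H G" unfolding H_def using period_subgroup[OF Cc] .
  have Hc: "H \<subseteq> carrier G" using H subgroup.subset by blast
  have Hne: "H \<noteq> carrier G"
  proof
    assume HG: "H = carrier G"
    have "carrier G \<subseteq> C"
    proof
      fix g assume g: "g \<in> carrier G"
      then have "C #> g = C" using HG unfolding H_def period_def by auto
      moreover have "\<one> \<otimes> g \<in> C #> g" using rcosI[OF C1 Cc g] .
      ultimately show "g \<in> C" using g by simp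
    qed
    then have CG: "C = carrier G" using Cc by blast
    have "sumset_pow G C 1 = carrier G"
    proof -
      have "sumset_pow G C 1 = {\<one>} <#> carrier G" using CG by (simp add: zero_ext_def insert_absorb)
      also have "\<dots> = carrier G"
      proof
        show "{\<one>} <#> carrier G \<subseteq> carrier G" by (auto simp: set_mult_def)
        show "carrier G \<subseteq> {\<one>} <#> carrier G"
        proof
          fix x assume "x \<in> carrier G"
          then have "\<one> \<otimes> x \<in> {\<one>} <#> carrier G" unfolding set_mult_def by blast
          then show "x \<in> {\<one>} <#> carrier G" using \<open>x \<in> carrier G\<close> by simp
        qed
      qed
      finally show ?thesis .
    qed
    then have "diam_plus G C \<le> enat 1" by (rule diam_le)
    then have "enat \<rho> \<le> enat 1" using Cd by (rule order_trans[rotated])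
    then show False using rho by simp
  qed
  define B where "B = (\<lambda>a. H #> a) ` C"
  have B: "B \<subseteq> rcosets H" unfolding B_def using Cc Hc by (auto intro: rcosetsI)
  have HB: "H \<in> B" unfolding B_def using C1 Hc by (auto intro!: image_eqI[of _ _ \<one>])
  have UB: "\<Union>B = C"
  proof
    show "\<Union>B \<subseteq> C"
    proof
      fix x assume "x \<in> \<Union>B"
      then obtain a where a: "a \<in> C" "x \<in> H #> a" unfolding B_def by blast
      then obtain h where h: "h \<in> H" "x = h \<otimes> a" unfolding r_coset_def by blast
      have "C #> h = C" using h unfolding H_def period_def by auto
      moreover have "a \<otimes> h \<in> C #> h" unfolding r_coset_def using a by blast
      moreover have "h \<otimes> a = a \<otimes> h" using h a Hc Cc by (auto intro: m_comm)
      ultimately show "x \<in> C" using h by simp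
    qed
    show "C \<subseteq> \<Union>B" unfolding B_def using rcos_self[OF _ H] Cc by blast
  qed
  have cardC: "card C = card H * card B" using card_union_cosets[OF H fin B] UB by simp
  have dm: "diam_plus (G Mod H) B = diam_plus G C" using Mod_diam[OF H Hne B HB] UB by simp
  have BcM: "B \<subseteq> carrier (G Mod H)" using B carrier_Mod by simp
  have grp: "group (G Mod H)" using Mod_group[OF H] .
  have gen: "generate (G Mod H) B = carrier (G Mod H)"
    using group.fin_diam_generate[OF grp BcM] Mod_sumset_iff[OF H Hne B HB, of r] Cr UB by simp
  have Bmax: "rho_maximal (G Mod H) \<rho> B"
    unfolding rho_maximal_def
  proof (intro conjI BcM allI impI)
    show "enat \<rho> \<le> diam_plus (G Mod H) B" using dm Cd by simp
    fix B2 assume B2: "B \<subset> B2 \<and> B2 \<subseteq> carrier (G Mod H)"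
    then have B2r: "B2 \<subseteq> rcosets H" using carrier_Mod by simp
    have HB2: "H \<in> B2" using B2 HB by blast
    have dm2: "diam_plus (G Mod H) B2 = diam_plus G (\<Union>B2)" using Mod_diam[OF H Hne B2r HB2] .
    have U2c: "\<Union>B2 \<subseteq> carrier G" using B2r rcosets_part_G[OF H] by blast
    have "C \<subset> \<Union>B2"
    proof -
      have sub: "C \<subseteq> \<Union>B2" using UB B2 by blast
      obtain V where V: "V \<in> B2" "V \<notin> B" using B2 by blast
      then obtain v where v: "v \<in> carrier G" "V = H #> v" using B2r unfolding RCOSETS_def by blast
      have "v \<notin> C"
      proof
        assume "v \<in> C"
        then obtain W where W: "W \<in> B" "v \<in> W" using UB by blast
        then obtain w where w: "w \<in> carrier G" "W = H #> w" using B unfolding RCOSETS_def by blast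
        have "H #> w = H #> v" using repr_independence[of v H w] W w H by simp
        then show False using V W v w by simp
      qed
      moreover have "v \<in> \<Union>B2" using V v rcos_self[OF v(1) H] by blast
      ultimately show ?thesis using sub by blast
    qed
    then have "\<not> enat \<rho> \<le> diam_plus G (\<Union>B2)" using Cmaxi U2c unfolding rho_maximal_def by blast
    then show "\<not> enat \<rho> \<le> diam_plus (G Mod H) B2" using dm2 by simp
  qed
  have aper: "aperiodic (G Mod H) B"
    unfolding aperiodic_def
  proof
    show "period (G Mod H) B \<subseteq> {\<one>\<^bsub>G Mod H\<^esub>}"
    proof
      fix U assume U: "U \<in> period (G Mod H) B"
      then have Uc: "U \<in> rcosets H" and UB2: "r_coset (G Mod H) B U = B"
        unfolding period_def using carrier_Mod by auto
      obtain g where g: "g \<in> carrier G" "U = H #> g" using Uc unfolding RCOSETS_def by blast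
      have "\<Union>(r_coset (G Mod H) B U) = C <#> U"
      proof -
        have "r_coset (G Mod H) B U = set_mult (G Mod H) B {U}" by (rule r_coset_eq_set_mult)
        then have "\<Union>(r_coset (G Mod H) B U) = \<Union>B <#> \<Union>{U}"
          using union_set_mult_Mod[of G H B "{U}"] by simp
        then show ?thesis using UB by simp
      qed
      then have CU: "C <#> U = C" using UB2 UB by simp
      have sub: "C #> g \<subseteq> C"
      proof
        fix x assume "x \<in> C #> g"
        then obtain c where c: "c \<in> C" "x = c \<otimes> g" unfolding r_coset_def by blast
        have "\<one> \<otimes> g \<in> U" using g rcosI[OF subgroup.one_closed[OF H] Hc g(1)] by simp
        then have "c \<otimes> (\<one> \<otimes> g) \<in> C <#> U" using c unfolding set_mult_def by blast
        then show "x \<in> C" using c g CU by simp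
      qed
      have "card (C #> g) = card C"
        using card_rcosets_equal[OF rcosetsI[OF Cc g(1)] Cc] by simp
      then have "C #> g = C" by (rule card_subset_eq[OF finCset sub])
      then have "g \<in> H" unfolding H_def period_def using g by simp
      then have "U = H" using g coset_join2[OF g(1) H] by simp
      then show "U \<in> {\<one>\<^bsub>G Mod H\<^esub>}" by simp
    qed
    show "{\<one>\<^bsub>G Mod H\<^esub>} \<subseteq> period (G Mod H) B"
    proof -
      have N: "H \<lhd> G" using H subgroup_imp_normal by blast
      have Hr: "H \<in> rcosets H" using B HB by blast
      have VH: "V <#> H = V" if "V \<in> B" for V
      proof -
        have "V \<in> rcosets H" using that B by (rule subsetD[rotated])
        then obtain v where v: "v \<in> carrier G" "V = H #> v" unfolding RCOSETS_def by blast
        have "(H #> v) <#> (H #> \<one>) = H #> (v \<otimes> \<one>)" by (rule normal.rcos_sum[OF N v(1) one_closed])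
        moreover have "H #> \<one> = H" using Hc by (rule coset_mult_one)
        moreover have "v \<otimes> \<one> = v" using v(1) by (rule r_one)
        ultimately show ?thesis using v(2) by simp
      qed
      have "r_coset (G Mod H) B H = (\<lambda>V. V <#> H) ` B"
        unfolding r_coset_def by (simp add: UNION_singleton_eq_range)
      also have "\<dots> = (\<lambda>V. V) ` B" by (rule image_cong) (simp_all add: VH)
      finally have "r_coset (G Mod H) B H = B" by simp
      then show ?thesis unfolding period_def using Hr carrier_Mod[of H] by simp
    qed
  qed
  have "card A \<le> card H * card B" using cardC card_mono[OF finCset AsubC] by simp
  then show ?thesis
    using H Hne aper Bmax BcM gen by blast
qed

end


lemma t_rho_fin:
  assumes "finite (carrier M)"
  shows "finite ({card A | A. aperiodic M A \<and> rho_maximal M \<rho> A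
                                  \<and> A \<subseteq> carrier M \<and> generate M A = carrier M} \<union> {0})"
proof -
  have "{card A | A. aperiodic M A \<and> rho_maximal M \<rho> A \<and> A \<subseteq> carrier M \<and> generate M A = carrier M}
        \<subseteq> {..card (carrier M)}" using assms card_mono by auto
  then show ?thesis using finite_subset by auto
qed

theorem lemma2p3:
  fixes G :: "('a, 'b) monoid_scheme" and \<rho> :: nat
  assumes "comm_group G" and "finite (carrier G)" and "2 \<le> \<rho>"
  shows "s_rho G \<rho> =
    Max ({card H * t_rho (G Mod H) \<rho> | H. subgroup H G \<and> H \<noteq> carrier G} \<union> {0})"
proof -
  interpret comm_group G by (rule assms(1))
  have fin: "finite (carrier G)" by (rule assms(2))
  define S where "S = {card A | A. A \<subseteq> carrier G \<and> enat \<rho> \<le> diam_plus G A \<and> diam_plus G A < \<infinity>}"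
  define R where "R = {card H * t_rho (G Mod H) \<rho> | H. subgroup H G \<and> H \<noteq> carrier G}"
  have finS: "finite (S \<union> {0})"
  proof -
    have "S \<subseteq> {..card (carrier G)}" unfolding S_def using fin card_mono by auto
    then show ?thesis using finite_subset by auto
  qed
  have finR: "finite (R \<union> {0})"
  proof -
    have "R \<subseteq> (\<lambda>H. card H * t_rho (G Mod H) \<rho>) ` Pow (carrier G)"
      unfolding R_def using subgroup.subset by blast
    moreover have "finite ((\<lambda>H. card H * t_rho (G Mod H) \<rho>) ` Pow (carrier G))" using fin by simp
    ultimately show ?thesis using finite_subset by auto
  qed
  have finMod: "finite (carrier (G Mod H))" if "subgroup H G" for H
    using carrier_Mod rcosets_subset_PowG[OF that] fin by (metis finite_Pow_iff finite_subset)
  have "Max (S \<union> {0}) \<le> Max (R \<union> {0})"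
  proof (rule Max.boundedI[OF finS])
    show "S \<union> {0} \<noteq> {}" by simp
    fix a assume "a \<in> S \<union> {0}"
    then consider "a = 0" | "a \<in> S" by blast
    then show "a \<le> Max (R \<union> {0})"
    proof cases
      case 1 then show ?thesis by simp
    next
      case 2
      then obtain A where A: "a = card A" "A \<subseteq> carrier G" "enat \<rho> \<le> diam_plus G A" "diam_plus G A < \<infinity>"
        unfolding S_def by blast
      obtain H B where HB: "subgroup H G" "H \<noteq> carrier G" "aperiodic (G Mod H) B"
        "rho_maximal (G Mod H) \<rho> B" "B \<subseteq> carrier (G Mod H)"
        "generate (G Mod H) B = carrier (G Mod H)" "card A \<le> card H * card B"
        using le_dir[OF fin assms(3) A(2-4)] by blast
      have "card B \<le> t_rho (G Mod H) \<rho>"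
        unfolding t_rho_def using HB by (intro Max_ge[OF t_rho_fin[OF finMod[OF HB(1)]]]) blast
      then have "card A \<le> card H * t_rho (G Mod H) \<rho>" using HB(7)
        by (meson le_trans mult_le_mono2)
      moreover have "card H * t_rho (G Mod H) \<rho> \<le> Max (R \<union> {0})"
        using HB(1,2) unfolding R_def by (intro Max_ge[OF finR[unfolded R_def]]) blast
      ultimately show ?thesis using A(1) by simp
    qed
  qed
  moreover have "Max (R \<union> {0}) \<le> Max (S \<union> {0})"
  proof (rule Max.boundedI[OF finR])
    show "R \<union> {0} \<noteq> {}" by simp
    fix a assume "a \<in> R \<union> {0}"
    then consider "a = 0" | "a \<in> R" by blast
    then show "a \<le> Max (S \<union> {0})"
    proof cases
      case 1 then show ?thesis by simp
    next
      case 2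
      then obtain H where H: "a = card H * t_rho (G Mod H) \<rho>" "subgroup H G" "H \<noteq> carrier G"
        unfolding R_def by blast
      let ?T = "{card A | A. aperiodic (G Mod H) A \<and> rho_maximal (G Mod H) \<rho> A
                   \<and> A \<subseteq> carrier (G Mod H) \<and> generate (G Mod H) A = carrier (G Mod H)}"
      have "t_rho (G Mod H) \<rho> \<in> ?T \<union> {0}"
        unfolding t_rho_def by (rule Max_in[OF t_rho_fin[OF finMod[OF H(2)]]]) simp
      then consider "t_rho (G Mod H) \<rho> = 0" | "t_rho (G Mod H) \<rho> \<in> ?T"
        by (meson UnE singletonD)
      then show ?thesis
      proof cases
        case 1 then show ?thesis using H(1) by simp
      next
        case 2
        then obtain B where B: "t_rho (G Mod H) \<rho> = card B" "rho_maximal (G Mod H) \<rho> B"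
          "B \<subseteq> carrier (G Mod H)" "generate (G Mod H) B = carrier (G Mod H)" by blast
        have X: "\<Union>B \<subseteq> carrier G \<and> enat \<rho> \<le> diam_plus G (\<Union>B) \<and> diam_plus G (\<Union>B) < \<infinity>
         \<and> card (\<Union>B) = card H * card B" using ge_dir[OF fin H(2,3) B(2-4)] .
        then have "card (\<Union>B) \<in> S" unfolding S_def by blast
        then have "card (\<Union>B) \<le> Max (S \<union> {0})" using finS by (intro Max_ge) auto
        then show ?thesis using X H(1) B(1) by simp
      qed
    qed
  qed
  ultimately have "Max (S \<union> {0}) = Max (R \<union> {0})" by simp
  then show ?thesis unfolding s_rho_def S_def R_def .
qed

end
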